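(* Let $\mathcal{A}=\langle Q,\{a,b\}\rangle$ be a synchronizing complete deterministic finite automaton with $|Q|=n$ states and two input letters $a,b$, and suppose that the letter $a$ is a simple idempotent. Then $\mathcal{A}$ has a reset word of length at most $(n-1)^2$, i.e., $\operatorname{rt}(\mathcal{A})\le (n-1)^2$.
   Context: A complete deterministic finite automaton (DFA) $\langle Q,\Sigma\rangle$ consists of a finite non-empty state set $Q$, a finite non-empty input alphabet $\Sigma$, and a transition function $Q\times\Sigma\to Q$, $(q,c)\mapsto q\cdot c$, extended to words by $q\cdot\varepsilon=q$ and $q\cdot(wc)=(q\cdot w)\cdot c$. For $P\subseteq Q$ and a word $w$, $P\cdot w=\{p\cdot w\mid p\in P\}$. A word $w\in\Sigma^*$ is a reset word if $|Q\cdot w|=1$; the DFA is synchronizing if it has a reset word, and its reset threshold $\operatorname{rt}(\mathcal{A})$ is the minimum length of a reset word. A letter $a$ is a simple idempotent if $|Q\setminus Q\cdot a|=1$ and $q\cdot a=q\cdot a^2$ for all $q\in Q$. *)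

theory Defs
  imports Main
begin

definition is_dfa :: "'q set \<Rightarrow> 'c set \<Rightarrow> ('q \<Rightarrow> 'c \<Rightarrow> 'q) \<Rightarrow> bool" where
  "is_dfa Q S delta \<longleftrightarrow> finite Q \<and> Q \<noteq> {} \<and> finite S \<and> S \<noteq> {} \<and>
     (\<forall>q\<in>Q. \<forall>c\<in>S. delta q c \<in> Q)"

definition delta_word :: "('q \<Rightarrow> 'c \<Rightarrow> 'q) \<Rightarrow> 'q \<Rightarrow> 'c list \<Rightarrow> 'q" where
  "delta_word delta q w = foldl delta q w"

definition reset_word :: "'q set \<Rightarrow> 'c set \<Rightarrow> ('q \<Rightarrow> 'c \<Rightarrow> 'q) \<Rightarrow> 'c list \<Rightarrow> bool" where
  "reset_word Q S delta w \<longleftrightarrow> set w \<subseteq> S \<and> card ((\<lambda>q. delta_word delta q w) ` Q) = 1"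

definition synchronizing :: "'q set \<Rightarrow> 'c set \<Rightarrow> ('q \<Rightarrow> 'c \<Rightarrow> 'q) \<Rightarrow> bool" where
  "synchronizing Q S delta \<longleftrightarrow> (\<exists>w. reset_word Q S delta w)"

definition reset_threshold :: "'q set \<Rightarrow> 'c set \<Rightarrow> ('q \<Rightarrow> 'c \<Rightarrow> 'q) \<Rightarrow> nat" where
  "reset_threshold Q S delta = (LEAST n. \<exists>w. reset_word Q S delta w \<and> length w = n)"

definition simple_idempotent :: "'q set \<Rightarrow> ('q \<Rightarrow> 'c \<Rightarrow> 'q) \<Rightarrow> 'c \<Rightarrow> bool" where
  "simple_idempotent Q delta a \<longleftrightarrow> card (Q - (\<lambda>q. delta q a) ` Q) = 1 \<and>
     (\<forall>q\<in>Q. delta q a = delta (delta q a) a)"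

end

theory Submission
  imports Defs
begin

definition stp :: "('q \<Rightarrow> 'q) \<Rightarrow> ('q \<Rightarrow> 'q) \<Rightarrow> 'q \<Rightarrow> bool \<Rightarrow> 'q" where
  "stp A B x c = (if c then A x else B x)"

definition run :: "('q \<Rightarrow> 'q) \<Rightarrow> ('q \<Rightarrow> 'q) \<Rightarrow> bool list \<Rightarrow> 'q \<Rightarrow> 'q" where
  "run A B w x = foldl (stp A B) x w"

lemma run_Nil[simp]: "run A B [] x = x" by (simp add: run_def)
lemma run_Cons[simp]: "run A B (c # w) x = run A B w (if c then A x else B x)"
  by (simp add: run_def stp_def)
lemma run_append[simp]: "run A B (u @ v) x = run A B v (run A B u x)"
  by (simp add: run_def)
lemma run_snoc: "run A B (w @ [c]) x = (if c then A (run A B w x) else B (run A B w x))"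
  by (simp add: run_def stp_def)

lemma run_closed: "A ` Q \<subseteq> Q \<Longrightarrow> B ` Q \<subseteq> Q \<Longrightarrow> x \<in> Q \<Longrightarrow> run A B w x \<in> Q"
  by (induction w arbitrary: x) auto

definition inv_cls :: "'q set \<Rightarrow> ('q \<Rightarrow> 'q) \<Rightarrow> ('q \<Rightarrow> 'q) \<Rightarrow> bool" where
  "inv_cls Q A B \<longleftrightarrow> finite Q \<and> Q \<noteq> {} \<and> A ` Q \<subseteq> Q \<and> B ` Q \<subseteq> Q \<and>
     (\<exists>p\<in>Q. \<forall>x\<in>Q. x \<noteq> p \<longrightarrow> A x = x)"

definition syn :: "'q set \<Rightarrow> ('q \<Rightarrow> 'q) \<Rightarrow> ('q \<Rightarrow> 'q) \<Rightarrow> bool" where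
  "syn Q A B \<longleftrightarrow> (\<exists>w. card (run A B w ` Q) = 1)"



lemma delta_word_run:
  assumes "set w \<subseteq> {a, b}" "a \<noteq> b"
  shows "delta_word delta x w = run (\<lambda>x. delta x a) (\<lambda>x. delta x b) (map (\<lambda>c. c = a) w) x"
  using assms
proof (induction w arbitrary: x)
  case Nil
  then show ?case by (simp add: delta_word_def)
next
  case (Cons c w)
  then show ?case by (auto simp: delta_word_def)
qed

lemma delta_word_run2:
  shows "delta_word delta x (map (\<lambda>c. if c then a else b) w) = run (\<lambda>x. delta x a) (\<lambda>x. delta x b) w x"
proof (induction w arbitrary: x)
  case Nil
  then show ?case by (simp add: delta_word_def)
next
  case (Cons c w)
  then show ?case by (auto simp: delta_word_def)
qed

lemma run_inj_closed:
  assumes "A ` C \<subseteq> C" "B ` C \<subseteq> C" "inj_on A C" "inj_on B C"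
  shows "inj_on (run A B w) C \<and> run A B w ` C \<subseteq> C"
proof (induction w rule: rev_induct)
  case Nil
  then show ?case by simp
next
  case (snoc c w)
  have e: "run A B (w @ [c]) = (if c then A else B) \<circ> run A B w"
    by (auto simp: run_snoc)
  have i: "inj_on (run A B w) C" and cl: "run A B w ` C \<subseteq> C" using snoc by auto
  show ?case
  proof (cases c)
    case True
    have "inj_on (A \<circ> run A B w) C"
      using comp_inj_on[OF i inj_on_subset[OF assms(3) cl]] .
    moreover have "(A \<circ> run A B w) ` C \<subseteq> C" using cl assms(1) by auto
    ultimately show ?thesis using True unfolding e by (simp add: comp_def)
  next
    case False
    have "inj_on (B \<circ> run A B w) C"
      using comp_inj_on[OF i inj_on_subset[OF assms(4) cl]] .
    moreover have "(B \<circ> run A B w) ` C \<subseteq> C" using cl assms(2) by auto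
    ultimately show ?thesis using False unfolding e by (simp add: comp_def)
  qed
qed

lemma closed_inj_card:
  assumes "C \<subseteq> Q" "finite Q" "A ` C \<subseteq> C" "B ` C \<subseteq> C" "inj_on A C" "inj_on B C" "syn Q A B"
  shows "card C \<le> 1"
proof -
  obtain w where w: "card (run A B w ` Q) = 1" using assms(7) unfolding syn_def by blast
  have "inj_on (run A B w) C" using run_inj_closed[OF assms(3-6)] by blast
  then have "card (run A B w ` C) = card C" by (rule card_image)
  moreover have "card (run A B w ` C) \<le> card (run A B w ` Q)"
    using assms(1,2) by (intro card_mono) auto
  ultimately show ?thesis using w by simp
qed

lemma merge_red:
  assumes cls: "inv_cls Q A B" and sy: "syn Q A B"
    and xy: "x \<in> Q" "y \<in> Q" "x \<noteq> y" "B x = B y"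
    and fA: "(\<lambda>z. if z = y then x else z) (A x) = (\<lambda>z. if z = y then x else z) (A y)"
  defines "f \<equiv> \<lambda>z. if z = y then x else z"
  shows "inv_cls (Q - {y}) (f \<circ> A) (f \<circ> B) \<and> syn (Q - {y}) (f \<circ> A) (f \<circ> B) \<and>
    (\<forall>w. card (run (f \<circ> A) (f \<circ> B) w ` (Q - {y})) = 1 \<longrightarrow> card (run A B (w @ [False]) ` Q) = 1)"
proof -
  from cls have fin: "finite Q" and clA: "A ` Q \<subseteq> Q" and clB: "B ` Q \<subseteq> Q"
    and pex: "\<exists>p\<in>Q. \<forall>x\<in>Q. x \<noteq> p \<longrightarrow> A x = x"
    unfolding inv_cls_def by auto
  have fQ: "f ` Q = Q - {y}" using xy unfolding f_def by auto
  have fin': "f z \<in> Q - {y}" if "z \<in> Q" for z using that xy unfolding f_def by auto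
  have hom: "run (f \<circ> A) (f \<circ> B) w (f z) = f (run A B w z)" if "z \<in> Q" for w z
    using that
  proof (induction w arbitrary: z)
    case Nil
    then show ?case by simp
  next
    case (Cons c w)
    have e1: "(f \<circ> A) (f z) = f (A z)" "(f \<circ> B) (f z) = f (B z)"
      using fA xy(4) unfolding f_def by auto
    have "A z \<in> Q" "B z \<in> Q" using Cons.prems clA clB by auto
    then show ?case using Cons.IH e1 by (cases c) auto
  qed
  have c1: "inv_cls (Q - {y}) (f \<circ> A) (f \<circ> B)"
  proof -
    obtain p where p: "p \<in> Q" "\<forall>x\<in>Q. x \<noteq> p \<longrightarrow> A x = x" using pex by blast
    have "Q - {y} \<noteq> {}" using xy by auto
    moreover have "(f \<circ> A) ` (Q - {y}) \<subseteq> Q - {y}" using clA fin' by auto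
    moreover have "(f \<circ> B) ` (Q - {y}) \<subseteq> Q - {y}" using clB fin' by auto
    moreover have "\<exists>p'\<in>Q - {y}. \<forall>z\<in>Q - {y}. z \<noteq> p' \<longrightarrow> (f \<circ> A) z = z"
    proof (cases "p = y")
      case True
      then show ?thesis using xy p unfolding f_def by (intro bexI[of _ x]) auto
    next
      case False
      then show ?thesis using p unfolding f_def by (intro bexI[of _ p]) auto
    qed
    ultimately show ?thesis using fin unfolding inv_cls_def by auto
  qed
  have c2: "syn (Q - {y}) (f \<circ> A) (f \<circ> B)"
  proof -
    obtain w where w: "card (run A B w ` Q) = 1" using sy unfolding syn_def by blast
    have "run (f \<circ> A) (f \<circ> B) w ` (Q - {y}) = run (f \<circ> A) (f \<circ> B) w ` (f ` Q)"
      using fQ by simp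
    also have "\<dots> = (\<lambda>z. run (f \<circ> A) (f \<circ> B) w (f z)) ` Q"
      by (simp only: image_image)
    also have "\<dots> = (\<lambda>z. f (run A B w z)) ` Q"
      by (rule image_cong) (simp_all add: hom)
    also have "\<dots> = f ` (run A B w ` Q)"
      by (simp only: image_image)
    finally have eq: "run (f \<circ> A) (f \<circ> B) w ` (Q - {y}) = f ` (run A B w ` Q)" .
    obtain s where "run A B w ` Q = {s}" using w card_1_singletonE by blast
    then show ?thesis unfolding syn_def using eq by (intro exI[of _ w]) simp
  qed
  have c3: "card (run A B (w @ [False]) ` Q) = 1"
    if w: "card (run (f \<circ> A) (f \<circ> B) w ` (Q - {y})) = 1" for w
  proof -
    obtain s where s: "run (f \<circ> A) (f \<circ> B) w ` (Q - {y}) = {s}" using w card_1_singletonE by blast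
    have fs: "f (run A B w z) = s" if "z \<in> Q" for z
    proof -
      have "f z \<in> Q - {y}" using fin' that .
      then have "run (f \<circ> A) (f \<circ> B) w (f z) = s" using s by blast
      then show ?thesis using hom that by simp
    qed
    have eqB: "B (run A B w z1) = B (run A B w z2)" if "z1 \<in> Q" "z2 \<in> Q" for z1 z2
    proof -
      have "f (run A B w z1) = f (run A B w z2)" using fs that by simp
      then show ?thesis using xy(4) unfolding f_def by (auto split: if_splits)
    qed
    obtain z0 where z0: "z0 \<in> Q" using xy by blast
    have "run A B (w @ [False]) ` Q = {B (run A B w z0)}"
    proof (intro equalityI subsetI)
      fix t assume "t \<in> run A B (w @ [False]) ` Q"
      then obtain z where z: "z \<in> Q" "t = B (run A B w z)" by (auto simp: run_snoc)
      show "t \<in> {B (run A B w z0)}" using eqB[OF z(1) z0] z(2) by simp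
    next
      fix t assume "t \<in> {B (run A B w z0)}"
      then show "t \<in> run A B (w @ [False]) ` Q" using z0 by (auto simp: run_snoc)
    qed
    then show ?thesis by simp
  qed
  show ?thesis using c1 c2 c3 by blast
qed

lemma restr_red:
  assumes cls: "inv_cls Q A B" and sy: "syn Q A B"
    and m: "m \<in> Q" "m \<notin> B ` Q" "A ` (Q - {m}) \<subseteq> Q - {m}" and two: "card Q \<ge> 2"
  shows "inv_cls (Q - {m}) A B \<and> syn (Q - {m}) A B \<and>
    (\<forall>w. card (run A B w ` (Q - {m})) = 1 \<longrightarrow> card (run A B (False # w) ` Q) = 1)"
proof -
  from cls have fin: "finite Q" and clA: "A ` Q \<subseteq> Q" and clB: "B ` Q \<subseteq> Q"
    and pex: "\<exists>p\<in>Q. \<forall>x\<in>Q. x \<noteq> p \<longrightarrow> A x = x"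
    unfolding inv_cls_def by auto
  have ne: "Q - {m} \<noteq> {}"
  proof
    assume "Q - {m} = {}"
    then have "Q = {m}" using m by auto
    then show False using two by simp
  qed
  have clB': "B ` (Q - {m}) \<subseteq> Q - {m}" using clB m by auto
  have c1: "inv_cls (Q - {m}) A B"
  proof -
    obtain p where p: "p \<in> Q" "\<forall>x\<in>Q. x \<noteq> p \<longrightarrow> A x = x" using pex by blast
    have "\<exists>p'\<in>Q - {m}. \<forall>z\<in>Q - {m}. z \<noteq> p' \<longrightarrow> A z = z"
    proof (cases "p = m")
      case True
      obtain z0 where "z0 \<in> Q - {m}" using ne by blast
      then show ?thesis using True p by (intro bexI[of _ z0]) auto
    next
      case False
      then show ?thesis using p by (intro bexI[of _ p]) auto
    qed
    then show ?thesis using fin ne m(3) clB' unfolding inv_cls_def by auto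
  qed
  have c2: "syn (Q - {m}) A B"
  proof -
    obtain w where w: "card (run A B w ` Q) = 1" using sy unfolding syn_def by blast
    have "card (run A B w ` (Q - {m})) \<le> 1"
      using w fin by (metis Diff_subset card_mono finite_imageI image_mono)
    moreover have "run A B w ` (Q - {m}) \<noteq> {}" using ne by blast
    moreover have "finite (run A B w ` (Q - {m}))" using fin by simp
    ultimately have "card (run A B w ` (Q - {m})) = 1"
      by (metis card_0_eq le_antisym less_one not_le)
    then show ?thesis unfolding syn_def by blast
  qed
  have c3: "card (run A B (False # w) ` Q) = 1" if w: "card (run A B w ` (Q - {m})) = 1" for w
  proof -
    obtain s where s: "run A B w ` (Q - {m}) = {s}" using w card_1_singletonE by blast
    have "run A B (False # w) ` Q \<subseteq> {s}"
    proof
      fix t assume "t \<in> run A B (False # w) ` Q"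
      then obtain z where z: "z \<in> Q" "t = run A B w (B z)" by auto
      have "B z \<in> Q - {m}" using z(1) clB m(2) by auto
      then show "t \<in> {s}" using s z(2) by blast
    qed
    moreover have "run A B (False # w) ` Q \<noteq> {}" using m by auto
    ultimately have "run A B (False # w) ` Q = {s}" by blast
    then show ?thesis by simp
  qed
  show ?thesis using c1 c2 c3 by blast
qed

lemma funpow_closed: "f ` X \<subseteq> X \<Longrightarrow> x \<in> X \<Longrightarrow> (f ^^ j) x \<in> X"
  by (induction j) auto

lemma funpow_inj: "inj_on f X \<Longrightarrow> f ` X \<subseteq> X \<Longrightarrow> inj_on (f ^^ j) X"
proof (induction j)
  case 0
  then show ?case by simp
next
  case (Suc j)
  have "inj_on (f \<circ> (f ^^ j)) X"
    using Suc by (intro comp_inj_on) (auto intro: inj_on_subset funpow_closed)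
  then show ?case by (simp add: comp_def)
qed

lemma funpow_image: "finite X \<Longrightarrow> inj_on f X \<Longrightarrow> f ` X \<subseteq> X \<Longrightarrow> (f ^^ j) ` X = X"
proof -
  assume a: "finite X" "inj_on f X" "f ` X \<subseteq> X"
  have i: "inj_on (f ^^ j) X" using funpow_inj[OF a(2,3)] .
  have s: "(f ^^ j) ` X \<subseteq> X" using funpow_closed[OF a(3)] by blast
  have "card ((f ^^ j) ` X) = card X" using card_image[OF i] .
  then show ?thesis using card_subset_eq[OF a(1) s] by simp
qed

lemma funpow_fix: "f x = x \<Longrightarrow> (f ^^ j) x = x"
  by (induction j) auto

lemma funpow_comm: "(f ^^ j) ((f ^^ i) x) = (f ^^ i) ((f ^^ j) x)"
proof -
  have "(f ^^ j) ((f ^^ i) x) = (f ^^ (j + i)) x" by (simp add: funpow_add)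
  also have "\<dots> = (f ^^ (i + j)) x" by (simp add: add.commute)
  also have "\<dots> = (f ^^ i) ((f ^^ j) x)" by (simp add: funpow_add)
  finally show ?thesis .
qed

lemma funpow_period_mult: "(f ^^ P) x = x \<Longrightarrow> (f ^^ (k * P)) x = x"
proof (induction k)
  case 0
  then show ?case by simp
next
  case (Suc k)
  have "(f ^^ (Suc k * P)) x = (f ^^ P) ((f ^^ (k * P)) x)"
    by (simp add: funpow_add)
  then show ?case using Suc by simp
qed

lemma funpow_mod: "(f ^^ P) x = x \<Longrightarrow> (f ^^ j) x = (f ^^ (j mod P)) x"
proof -
  assume h: "(f ^^ P) x = x"
  have "j = j mod P + (j div P) * P" by simp
  then have "(f ^^ j) x = (f ^^ (j mod P + (j div P) * P)) x" by simp
  also have "\<dots> = (f ^^ (j mod P)) ((f ^^ ((j div P) * P)) x)"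
    by (simp only: funpow_add comp_apply)
  finally have "(f ^^ j) x = (f ^^ (j mod P)) ((f ^^ ((j div P) * P)) x)" .
  then show ?thesis using funpow_period_mult[OF h] by simp
qed

lemma period_exists:
  assumes fin: "finite X" and cl: "f ` X \<subseteq> X" and inj: "inj_on f X" and x: "x \<in> X"
  shows "\<exists>P. 1 \<le> P \<and> P \<le> card X \<and> (f ^^ P) x = x"
proof -
  define g where "g = (\<lambda>i. (f ^^ i) x)"
  have "g ` {0..card X} \<subseteq> X" unfolding g_def using funpow_closed[OF cl x] by auto
  then have "card (g ` {0..card X}) \<le> card X" using fin by (simp add: card_mono)
  then have "\<not> inj_on g {0..card X}"
  proof -
    assume c: "card (g ` {0..card X}) \<le> card X"
    show ?thesis
    proof
      assume "inj_on g {0..card X}"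
      then have "card (g ` {0..card X}) = card {0..card X}" by (rule card_image)
      then show False using c by simp
    qed
  qed
  then obtain i k where ik: "i \<in> {0..card X}" "k \<in> {0..card X}" "i \<noteq> k" "g i = g k"
    unfolding inj_on_def by blast
  have "\<exists>i k. i < k \<and> k \<le> card X \<and> g i = g k"
  proof (cases "i < k")
    case True
    then show ?thesis using ik by auto
  next
    case False
    then have "k < i" using ik by simp
    then show ?thesis using ik by (intro exI[of _ k] exI[of _ i]) auto
  qed
  then obtain i k where ik2: "i < k" "k \<le> card X" "g i = g k" by blast
  have "(f ^^ i) ((f ^^ (k - i)) x) = (f ^^ i) x"
  proof -
    have "(f ^^ i) ((f ^^ (k - i)) x) = (f ^^ (i + (k - i))) x" by (simp add: funpow_add)
    also have "\<dots> = (f ^^ k) x" using ik2 by simp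
    finally show ?thesis using ik2 unfolding g_def by simp
  qed
  moreover have "(f ^^ (k - i)) x \<in> X" using funpow_closed[OF cl x] .
  ultimately have "(f ^^ (k - i)) x = x"
    using funpow_inj[OF inj cl, of i] x unfolding inj_on_def by blast
  moreover have "1 \<le> k - i" "k - i \<le> card X" using ik2 by auto
  ultimately show ?thesis by blast
qed

definition Gp :: "('q \<Rightarrow> 'q) \<Rightarrow> 'q \<Rightarrow> 'q \<Rightarrow> 'q set \<Rightarrow> bool" where
  "Gp s p0 y0 T \<longleftrightarrow> (\<forall>j. (s ^^ j) y0 \<in> T \<longrightarrow> (s ^^ j) p0 \<in> T)"

lemma fam_sigma:
  assumes cl: "s ` X \<subseteq> X" and inj: "inj_on s X" and fin: "finite X"
    and pX: "p0 \<in> X" and yX: "y0 \<in> X"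
    and G: "Gp s p0 y0 T" and TX: "T \<subseteq> X"
  shows "Gp s p0 y0 {x\<in>X. s x \<in> T} \<and> card {x\<in>X. s x \<in> T} \<le> card T"
proof
  show "Gp s p0 y0 {x\<in>X. s x \<in> T}"
    unfolding Gp_def
  proof (intro allI impI)
    fix j assume "(s ^^ j) y0 \<in> {x \<in> X. s x \<in> T}"
    then have "(s ^^ Suc j) y0 \<in> T" by simp
    then have "(s ^^ Suc j) p0 \<in> T" using G unfolding Gp_def by blast
    then show "(s ^^ j) p0 \<in> {x \<in> X. s x \<in> T}" using funpow_closed[OF cl pX] by simp
  qed
next
  have "card {x\<in>X. s x \<in> T} = card (s ` {x\<in>X. s x \<in> T})"
    using inj by (intro card_image[symmetric]) (auto intro: inj_on_subset)
  also have "\<dots> \<le> card T" using fin TX by (intro card_mono) (auto intro: finite_subset)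
  finally show "card {x\<in>X. s x \<in> T} \<le> card T" .
qed

lemma fam_e:
  assumes pX: "p0 \<in> X" and yX: "y0 \<in> X" and py: "p0 \<noteq> y0"
    and e: "\<forall>x\<in>X. e x = (if x = p0 then y0 else x)"
    and star: "\<forall>j. (s ^^ j) p0 = p0 \<longrightarrow> (s ^^ j) y0 = y0"
    and G: "Gp s p0 y0 T" and TX: "T \<subseteq> X" and fin: "finite X"
    and cl: "s ` X \<subseteq> X"
  shows "Gp s p0 y0 {x\<in>X. e x \<in> T} \<and> card {x\<in>X. e x \<in> T} \<le> card T"
proof -
  have G0: "y0 \<in> T \<longrightarrow> p0 \<in> T" using G[unfolded Gp_def, rule_format, of 0] by simp
  have part1: "Gp s p0 y0 {x\<in>X. e x \<in> T}"
    unfolding Gp_def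
  proof (intro allI impI)
    fix j
    define u where "u = (s ^^ j) y0"
    define v where "v = (s ^^ j) p0"
    have uX: "u \<in> X" unfolding u_def using funpow_closed[OF cl yX] .
    have vX: "v \<in> X" unfolding v_def using funpow_closed[OF cl pX] .
    assume "(s ^^ j) y0 \<in> {x \<in> X. e x \<in> T}"
    then have eu: "e u \<in> T" unfolding u_def by simp
    have Gj: "u \<in> T \<Longrightarrow> v \<in> T" using G unfolding Gp_def u_def v_def by blast
    show "(s ^^ j) p0 \<in> {x \<in> X. e x \<in> T}"
    proof (cases "v = p0")
      case True
      then have "u = y0" using star unfolding u_def v_def by blast
      then have "y0 \<in> T" using eu e yX py by simp
      then show ?thesis using True e pX unfolding v_def by simp
    next
      case False
      have "v \<in> T"
      proof (cases "u = p0")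
        case True
        then have "y0 \<in> T" using eu e pX by simp
        then have "p0 \<in> T" using G0 by blast
        then show ?thesis using Gj True by simp
      next
        case False
        then show ?thesis using Gj eu e uX by simp
      qed
      then show ?thesis using False e vX unfolding v_def by simp
    qed
  qed
  have "{x\<in>X. e x \<in> T} \<subseteq> T"
  proof
    fix x assume x: "x \<in> {x\<in>X. e x \<in> T}"
    show "x \<in> T"
    proof (cases "x = p0")
      case True
      then have "y0 \<in> T" using x e by auto
      then show ?thesis using G0 True by blast
    next
      case False
      then show ?thesis using x e by auto
    qed
  qed
  then have "card {x\<in>X. e x \<in> T} \<le> card T" using fin TX by (intro card_mono) (auto intro: finite_subset)
  then show ?thesis using part1 by blast
qed

lemma chain:
  assumes fin: "finite X"
    and step: "\<And>S. E S \<Longrightarrow> S \<subseteq> X \<Longrightarrow> S \<noteq> X \<Longrightarrow>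
      \<exists>u. length u \<le> c \<and> card {x\<in>X. run A B u x \<in> S} > card S \<and> E {x\<in>X. run A B u x \<in> S}"
  shows "E S \<Longrightarrow> S \<subseteq> X \<Longrightarrow> \<exists>W. (\<forall>x\<in>X. run A B W x \<in> S) \<and> length W \<le> c * (card X - card S)"
proof (induction "card X - card S" arbitrary: S rule: less_induct)
  case less
  show ?case
  proof (cases "S = X")
    case True
    then show ?thesis by (intro exI[of _ "[]"]) auto
  next
    case False
    obtain u where u: "length u \<le> c" "card {x\<in>X. run A B u x \<in> S} > card S"
      "E {x\<in>X. run A B u x \<in> S}"
      using step[OF less.prems False] by blast
    define S' where "S' = {x\<in>X. run A B u x \<in> S}"
    have S'X: "S' \<subseteq> X" unfolding S'_def by auto
    have cS': "card S' \<le> card X" using S'X fin by (simp add: card_mono)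
    have lt: "card X - card S' < card X - card S" using u(2) cS' unfolding S'_def by linarith
    obtain W where W: "\<forall>x\<in>X. run A B W x \<in> S'" "length W \<le> c * (card X - card S')"
      using less.hyps[OF lt] u(3) S'X unfolding S'_def by blast
    have "\<forall>x\<in>X. run A B (W @ u) x \<in> S" using W(1) unfolding S'_def by simp
    moreover have "length (W @ u) \<le> c * (card X - card S)"
    proof -
      have "length (W @ u) \<le> c * (card X - card S') + c" using W(2) u(1) by simp
      also have "\<dots> = c * (card X - card S' + 1)" by simp
      also have "\<dots> \<le> c * (card X - card S)" using lt by (intro mult_le_mono2) linarith
      finally show ?thesis .
    qed
    ultimately show ?thesis by blast
  qed
qed

lemma dichotomy:
  assumes fin: "finite Q" and clA: "A ` Q \<subseteq> Q" and clB: "B ` Q \<subseteq> Q"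
    and p: "p \<in> Q" and fx: "\<forall>x\<in>Q. x \<noteq> p \<longrightarrow> A x = x"
    and injp: "inj_on B (Q - {p})" and cov: "Q \<subseteq> B ` Q \<union> {A p}" and sy: "syn Q A B"
  shows "\<exists>s0 w0. s0 \<in> Q \<and> (\<forall>x\<in>Q. run A B w0 x = s0) \<and>
     ((A s0 = s0 \<and> B s0 = s0) \<or> (\<forall>t\<in>Q. \<exists>u. run A B u s0 = t))"
proof -
  obtain w0 where w0: "card (run A B w0 ` Q) = 1" using sy unfolding syn_def by blast
  then obtain s0 where s0: "run A B w0 ` Q = {s0}" using card_1_singletonE by blast
  have s0Q: "s0 \<in> Q"
  proof -
    have "s0 \<in> run A B w0 ` Q" using s0 by simp
    then obtain x where "x \<in> Q" "s0 = run A B w0 x" by blast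
    then show ?thesis using run_closed[OF clA clB] by simp
  qed
  have ws0: "\<forall>x\<in>Q. run A B w0 x = s0" using s0 by blast
  define R where "R = {t. \<exists>u. run A B u s0 = t}"
  have RQ: "R \<subseteq> Q" unfolding R_def using run_closed[OF clA clB s0Q] by blast
  have s0R: "s0 \<in> R" unfolding R_def by (intro CollectI exI[of _ "[]"]) simp
  have RA: "A ` R \<subseteq> R"
  proof
    fix t assume "t \<in> A ` R"
    then obtain r u where "t = A r" "run A B u s0 = r" unfolding R_def by blast
    then have "run A B (u @ [True]) s0 = t" by (simp add: run_snoc)
    then show "t \<in> R" unfolding R_def by blast
  qed
  have RB: "B ` R \<subseteq> R"
  proof
    fix t assume "t \<in> B ` R"
    then obtain r u where "t = B r" "run A B u s0 = r" unfolding R_def by blast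
    then have "run A B (u @ [False]) s0 = t" by (simp add: run_snoc)
    then show "t \<in> R" unfolding R_def by blast
  qed
  show ?thesis
  proof (cases "p \<in> R")
    case True
    define X where "X = Q - R"
    have XB: "X \<subseteq> B ` {x\<in>X. B x \<in> X}"
    proof
      fix t assume t: "t \<in> X"
      have "A p \<in> R" using RA True by blast
      then have "t \<noteq> A p" using t unfolding X_def by blast
      then have "t \<in> B ` Q" using cov t unfolding X_def by blast
      then obtain x where x: "x \<in> Q" "t = B x" by blast
      have "x \<notin> R" using RB x t unfolding X_def by blast
      then show "t \<in> B ` {x\<in>X. B x \<in> X}" using x t unfolding X_def by blast
    qed
    have finX: "finite X" unfolding X_def using fin by simp
    have "card X \<le> card {x\<in>X. B x \<in> X}"
    proof -
      have "card X \<le> card (B ` {x\<in>X. B x \<in> X})" using XB finX by (intro card_mono) auto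
      also have "\<dots> \<le> card {x\<in>X. B x \<in> X}" using finX by (intro card_image_le) simp
      finally show ?thesis .
    qed
    moreover have "card {x\<in>X. B x \<in> X} \<le> card X" using finX by (intro card_mono) auto
    ultimately have "card {x\<in>X. B x \<in> X} = card X" by (rule le_antisym[rotated])
    then have "{x\<in>X. B x \<in> X} = X" by (intro card_subset_eq[OF finX]) auto
    then have XBc: "B ` X \<subseteq> X" by blast
    have XAc: "A ` X \<subseteq> X"
    proof
      fix t assume "t \<in> A ` X"
      then obtain x where x: "x \<in> X" "t = A x" by blast
      have "x \<noteq> p" using x True unfolding X_def by blast
      then show "t \<in> X" using x fx unfolding X_def by auto
    qed
    have "X = {}"
    proof (rule ccontr)
      assume "X \<noteq> {}"
      then obtain x where x: "x \<in> X" by blast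
      have "run A B w0 x \<in> X" using run_closed[OF XAc XBc x] .
      moreover have "run A B w0 x = s0" using ws0 x unfolding X_def by blast
      ultimately show False using s0R unfolding X_def by blast
    qed
    then have "\<forall>t\<in>Q. \<exists>u. run A B u s0 = t" unfolding X_def R_def by blast
    then show ?thesis using s0Q ws0 by (intro exI[of _ s0] exI[of _ w0]) simp
  next
    case False
    have "inj_on A R"
    proof (rule inj_onI)
      fix u v assume uv: "u \<in> R" "v \<in> R" "A u = A v"
      have u: "u \<in> Q" "u \<noteq> p" using uv(1) RQ False by blast+
      have v: "v \<in> Q" "v \<noteq> p" using uv(2) RQ False by blast+
      have Au: "A u = u" using fx u by blast
      have Av: "A v = v" using fx v by blast
      show "u = v" using uv(3) unfolding Au Av .
    qed
    moreover have "inj_on B R" by (rule inj_on_subset[OF injp]) (use RQ False in blast)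
    ultimately have cR: "card R \<le> 1" using closed_inj_card[OF RQ fin RA RB _ _ sy] by simp
    have fR: "finite R" using RQ fin by (rule finite_subset)
    have R1': "\<forall>a\<in>R. \<forall>b\<in>R. a = b" using card_le_Suc0_iff_eq[OF fR] cR by simp
    note R1 = R1'[rule_format]
    have "A s0 \<in> R" using RA s0R by blast
    from R1[OF this s0R] have "A s0 = s0" .
    moreover have "B s0 \<in> R" using RB s0R by blast
    from R1[OF this s0R] have "B s0 = s0" .
    ultimately show ?thesis using s0Q ws0 by (intro exI[of _ s0] exI[of _ w0]) simp
  qed
qed

definition Eset :: "'q set \<Rightarrow> ('q \<Rightarrow> 'q) \<Rightarrow> ('q \<Rightarrow> 'q) \<Rightarrow> 'q set \<Rightarrow> 'q set \<Rightarrow> bool" where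
  "Eset Q A B X S \<longleftrightarrow> S \<subseteq> X \<and> S \<noteq> {} \<and> (\<forall>s\<in>Q. A s = s \<and> B s = s \<longrightarrow> s \<in> S)"

lemma Eset_ext:
  assumes fin: "finite Q" and clA: "A ` Q \<subseteq> Q" and clB: "B ` Q \<subseteq> Q"
    and p: "p \<in> Q" and fx: "\<forall>x\<in>Q. x \<noteq> p \<longrightarrow> A x = x"
    and injp: "inj_on B (Q - {p})" and cov: "Q \<subseteq> B ` Q \<union> {A p}" and sy: "syn Q A B"
    and E: "Eset Q A B X S" and XQ: "X \<subseteq> Q"
  shows "\<exists>w. \<forall>x\<in>Q. run A B w x \<in> S"
proof -
  obtain s0 w0 where s0: "s0 \<in> Q" "\<forall>x\<in>Q. run A B w0 x = s0"
    and alt: "(A s0 = s0 \<and> B s0 = s0) \<or> (\<forall>t\<in>Q. \<exists>u. run A B u s0 = t)"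
    using dichotomy[OF fin clA clB p fx injp cov sy] by blast
  from alt show ?thesis
  proof
    assume "A s0 = s0 \<and> B s0 = s0"
    then have "s0 \<in> S" using E s0 unfolding Eset_def by blast
    then show ?thesis using s0 by auto
  next
    assume r: "\<forall>t\<in>Q. \<exists>u. run A B u s0 = t"
    obtain t where t: "t \<in> S" using E unfolding Eset_def by blast
    then have "t \<in> Q" using E XQ unfolding Eset_def by blast
    then obtain u where "run A B u s0 = t" using r by blast
    then have "\<forall>x\<in>Q. run A B (w0 @ u) x \<in> S" using s0 t by simp
    then show ?thesis by blast
  qed
qed

lemma Eset_pre:
  assumes E: "Eset Q A B X S" and gt: "card {x\<in>X. run A B u x \<in> S} > card S"
    and sinkX: "\<forall>s\<in>Q. A s = s \<and> B s = s \<longrightarrow> s \<in> X"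
  shows "Eset Q A B X {x\<in>X. run A B u x \<in> S}"
proof -
  have "{x\<in>X. run A B u x \<in> S} \<noteq> {}"
  proof
    assume h: "{x\<in>X. run A B u x \<in> S} = {}"
    have "card {x\<in>X. run A B u x \<in> S} = 0" unfolding h by simp
    then show False using gt by simp
  qed
  moreover have "\<forall>s\<in>Q. A s = s \<and> B s = s \<longrightarrow> s \<in> {x\<in>X. run A B u x \<in> S}"
  proof (intro ballI impI)
    fix s assume s: "s \<in> Q" "A s = s \<and> B s = s"
    have "run A B u s = s" using s(2) by (induction u) auto
    then show "s \<in> {x\<in>X. run A B u x \<in> S}" using E s sinkX unfolding Eset_def by auto
  qed
  ultimately show ?thesis unfolding Eset_def by blast
qed

lemma run_repl_False: "run A B (replicate k False) x = (B ^^ k) x"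
  by (induction k arbitrary: x) (simp_all add: funpow_swap1)

lemma fam_words:
  assumes clA: "A ` Q \<subseteq> Q" and clB: "B ` Q \<subseteq> Q" and inj: "inj_on B Q" and fin: "finite Q"
    and pQ: "p0 \<in> Q" and yQ: "y0 \<in> Q" and py: "p0 \<noteq> y0"
    and e: "\<forall>x\<in>Q. A x = (if x = p0 then y0 else x)"
    and star: "\<forall>j. (B ^^ j) p0 = p0 \<longrightarrow> (B ^^ j) y0 = y0"
    and G: "Gp B p0 y0 T" and TQ: "T \<subseteq> Q"
  shows "Gp B p0 y0 {x\<in>Q. run A B w x \<in> T} \<and> card {x\<in>Q. run A B w x \<in> T} \<le> card T"
proof (induction w)
  case Nil
  have "{x\<in>Q. run A B [] x \<in> T} = T" using TQ by auto
  then show ?case using G by simp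
next
  case (Cons c w)
  define T' where "T' = {x\<in>Q. run A B w x \<in> T}"
  have T'Q: "T' \<subseteq> Q" unfolding T'_def by auto
  have GT': "Gp B p0 y0 T'" and cT': "card T' \<le> card T" using Cons unfolding T'_def by auto
  show ?case
  proof (cases c)
    case True
    have eq: "{x\<in>Q. run A B (c # w) x \<in> T} = {x\<in>Q. A x \<in> T'}"
      using True clA unfolding T'_def by auto
    have "Gp B p0 y0 {x\<in>Q. A x \<in> T'} \<and> card {x\<in>Q. A x \<in> T'} \<le> card T'"
      by (rule fam_e[OF pQ yQ py e star GT' T'Q fin clB])
    then show ?thesis unfolding eq using cT' by auto
  next
    case False
    have eq: "{x\<in>Q. run A B (c # w) x \<in> T} = {x\<in>Q. B x \<in> T'}"
      using False clB unfolding T'_def by auto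
    have "Gp B p0 y0 {x\<in>Q. B x \<in> T'} \<and> card {x\<in>Q. B x \<in> T'} \<le> card T'"
      by (rule fam_sigma[OF clB inj fin pQ yQ GT' T'Q])
    then show ?thesis unfolding eq using cT' by auto
  qed
qed

lemma perm_case:
  assumes fin: "finite Q" and two: "card Q \<ge> 2" and clA: "A ` Q \<subseteq> Q" and clB: "B ` Q \<subseteq> Q"
    and p: "p \<in> Q" "A p \<noteq> p" and fx: "\<forall>x\<in>Q. x \<noteq> p \<longrightarrow> A x = x"
    and inj: "inj_on B Q" and sy: "syn Q A B"
  shows "\<exists>w. card (run A B w ` Q) = 1 \<and> length w \<le> (card Q - 1)^2"
proof -
  define q where "q = A p"
  define n where "n = card Q"
  have qQ: "q \<in> Q" using clA p unfolding q_def by blast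
  have qp: "q \<noteq> p" using p unfolding q_def by simp
  have e: "\<forall>x\<in>Q. A x = (if x = p then q else x)" using fx unfolding q_def by auto
  have Bim: "B ` Q = Q" using funpow_image[OF fin inj clB, of 1] by simp
  have injp: "inj_on B (Q - {p})" using inj by (rule inj_on_subset) blast
  have cov: "Q \<subseteq> B ` Q \<union> {A p}" using Bim by blast
  have star: "\<forall>j. (B ^^ j) p = p \<longrightarrow> (B ^^ j) q = q"
  proof -
    define Orb where "Orb = {t. \<exists>i. (B ^^ i) q = t}"
    show ?thesis
    proof (cases "p \<in> Orb")
      case True
      then obtain i where i: "(B ^^ i) q = p" unfolding Orb_def by blast
      show ?thesis
      proof (intro allI impI)
        fix j assume j: "(B ^^ j) p = p"
        have "(B ^^ i) ((B ^^ j) q) = (B ^^ j) ((B ^^ i) q)" by (rule funpow_comm)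
        also have "\<dots> = (B ^^ i) q" using i j by simp
        finally have "(B ^^ i) ((B ^^ j) q) = (B ^^ i) q" .
        moreover have "(B ^^ j) q \<in> Q" using funpow_closed[OF clB qQ] .
        ultimately show "(B ^^ j) q = q"
          using funpow_inj[OF inj clB, of i] qQ unfolding inj_on_def by blast
      qed
    next
      case False
      have OQ: "Orb \<subseteq> Q" unfolding Orb_def using funpow_closed[OF clB qQ] by blast
      have OB: "B ` Orb \<subseteq> Orb"
      proof
        fix t assume "t \<in> B ` Orb"
        then obtain i where "t = B ((B ^^ i) q)" unfolding Orb_def by blast
        then have "(B ^^ Suc i) q = t" by simp
        then show "t \<in> Orb" unfolding Orb_def by blast
      qed
      have Aid: "\<forall>t\<in>Orb. A t = t"
      proof
        fix t assume t: "t \<in> Orb"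
        then have "t \<in> Q" "t \<noteq> p" using OQ False by blast+
        then show "A t = t" using fx by blast
      qed
      have OA: "A ` Orb \<subseteq> Orb" using Aid by auto
      have iA: "inj_on A Orb" using Aid by (auto simp: inj_on_def)
      have iB: "inj_on B Orb" using inj OQ by (rule inj_on_subset)
      have cO: "card Orb \<le> 1" using closed_inj_card[OF OQ fin OA OB iA iB sy] .
      have fO: "finite Orb" using OQ fin by (rule finite_subset)
      have O1: "\<forall>a\<in>Orb. \<forall>b\<in>Orb. a = b" using card_le_Suc0_iff_eq[OF fO] cO by simp
      have q0: "q \<in> Orb" unfolding Orb_def by (intro CollectI exI[of _ 0]) simp
      have "B q \<in> Orb" using OB q0 by blast
      from O1[rule_format, OF this q0] have "B q = q" .
      then show ?thesis using funpow_fix[of B q] by blast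
    qed
  qed
  obtain P where P: "1 \<le> P" "P \<le> n" "(B ^^ P) p = p"
    using period_exists[OF fin clB inj p(1)] unfolding n_def by blast
  have Pq: "(B ^^ P) q = q" using star P(3) by blast
  have step: "\<exists>u. length u \<le> n \<and> card {x\<in>Q. run A B u x \<in> S} > card S \<and>
      Eset Q A B Q {x\<in>Q. run A B u x \<in> S}"
    if E: "Eset Q A B Q S" and SQ: "S \<subseteq> Q" and SnQ: "S \<noteq> Q" for S
  proof -
    obtain w0 where w0: "\<forall>x\<in>Q. run A B w0 x \<in> S"
      using Eset_ext[OF fin clA clB p(1) fx injp cov sy E] by blast
    have "\<exists>j. (B ^^ j) q \<in> S \<and> (B ^^ j) p \<notin> S"
    proof (rule ccontr)
      assume "\<not> ?thesis"
      then have G: "Gp B p q S" unfolding Gp_def by blast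
      have "card {x\<in>Q. run A B w0 x \<in> S} \<le> card S"
        using fam_words[OF clA clB inj fin p(1) qQ qp[symmetric] e star G SQ] by blast
      moreover have "{x\<in>Q. run A B w0 x \<in> S} = Q" using w0 by blast
      ultimately have "card Q \<le> card S" by simp
      moreover have "card S \<le> card Q" using card_mono[OF fin SQ] .
      ultimately have "card S = card Q" by (rule le_antisym[rotated])
      then have "S = Q" by (rule card_subset_eq[OF fin SQ])
      then show False using SnQ by simp
    qed
    then obtain j where j: "(B ^^ j) q \<in> S" "(B ^^ j) p \<notin> S" by blast
    define k where "k = j mod P"
    have kP: "k < P" unfolding k_def using P(1) by simp
    have jq: "(B ^^ k) q \<in> S" using j(1) funpow_mod[OF Pq, of j] unfolding k_def by simp
    have jp: "(B ^^ k) p \<notin> S" using j(2) funpow_mod[OF P(3), of j] unfolding k_def by simp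
    define u where "u = True # replicate k False"
    have ru: "run A B u x = (B ^^ k) (A x)" for x unfolding u_def by (simp add: run_repl_False)
    define V where "V = {x\<in>Q. (B ^^ k) x \<in> S}"
    have pV: "p \<notin> V" using jp unfolding V_def by simp
    have eqset: "{x\<in>Q. run A B u x \<in> S} = insert p V"
    proof (intro equalityI subsetI)
      fix x assume x: "x \<in> {x\<in>Q. run A B u x \<in> S}"
      show "x \<in> insert p V"
      proof (cases "x = p")
        case False
        then have "A x = x" using fx x by blast
        then show ?thesis using x ru unfolding V_def by auto
      qed simp
    next
      fix x assume x: "x \<in> insert p V"
      show "x \<in> {x\<in>Q. run A B u x \<in> S}"
      proof (cases "x = p")
        case True
        then show ?thesis using jq p(1) ru unfolding q_def by simp
      next
        case False
        then have "x \<in> V" using x by blast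
        moreover have "A x = x" using fx False \<open>x \<in> V\<close> unfolding V_def by blast
        ultimately show ?thesis using ru unfolding V_def by simp
      qed
    qed
    have cV: "card V = card S"
    proof -
      have i: "inj_on (B ^^ k) V" using funpow_inj[OF inj clB, of k] unfolding V_def
        by (rule inj_on_subset) blast
      have "(B ^^ k) ` V = S"
      proof
        show "(B ^^ k) ` V \<subseteq> S" unfolding V_def by blast
        show "S \<subseteq> (B ^^ k) ` V"
        proof
          fix t assume t: "t \<in> S"
          then have "t \<in> (B ^^ k) ` Q" using funpow_image[OF fin inj clB, of k] SQ by blast
          then obtain x where "x \<in> Q" "t = (B ^^ k) x" by blast
          then show "t \<in> (B ^^ k) ` V" using t unfolding V_def by blast
        qed
      qed
      then show ?thesis using card_image[OF i] by simp
    qed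
    have fV: "finite V" unfolding V_def using fin by simp
    have cnew: "card {x\<in>Q. run A B u x \<in> S} = card S + 1"
      unfolding eqset using pV fV cV by simp
    have lu: "length u \<le> n" unfolding u_def using kP P(2) by simp
    have "Eset Q A B Q {x\<in>Q. run A B u x \<in> S}"
      by (rule Eset_pre[OF E]) (use cnew in simp_all)
    then show ?thesis using lu cnew by (intro exI[of _ u]) simp
  qed
  have E0: "Eset Q A B Q {p, q}"
  proof -
    have "s \<in> {p, q}" if s: "s \<in> Q" "A s = s" "B s = s" for s
    proof (rule ccontr)
      assume ns: "s \<notin> {p, q}"
      define C where "C = Q - {s}"
      have CA: "A ` C \<subseteq> C"
      proof
        fix t assume "t \<in> A ` C"
        then obtain x where x: "x \<in> C" "t = A x" by blast
        show "t \<in> C"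
        proof (cases "x = p")
          case True
          then show ?thesis using x qQ ns unfolding C_def q_def by auto
        next
          case False
          then show ?thesis using x fx unfolding C_def by auto
        qed
      qed
      have CB: "B ` C \<subseteq> C"
      proof
        fix t assume "t \<in> B ` C"
        then obtain x where x: "x \<in> C" "t = B x" by blast
        have "t \<noteq> s"
        proof
          assume "t = s"
          then have "B x = B s" using x s by simp
          then have "x = s" using inj x s unfolding C_def inj_on_def by blast
          then show False using x unfolding C_def by blast
        qed
        then show "t \<in> C" using x clB unfolding C_def by auto
      qed
      obtain w where w: "card (run A B w ` Q) = 1" using sy unfolding syn_def by blast
      then obtain s0 where s0: "run A B w ` Q = {s0}" using card_1_singletonE by blast
      have "run A B w s = s" using s by (induction w) auto
      moreover have "run A B w s \<in> run A B w ` Q" using s(1) by blast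
      ultimately have "s0 = s" using s0 by simp
      moreover have "p \<in> C" using p ns unfolding C_def by auto
      then have "run A B w p \<in> C" by (rule run_closed[OF CA CB])
      moreover have "run A B w p = s0" using s0 p(1) by blast
      ultimately show False unfolding C_def by blast
    qed
    then show ?thesis unfolding Eset_def using p qQ by auto
  qed
  obtain W where W: "\<forall>x\<in>Q. run A B W x \<in> {p, q}" "length W \<le> n * (card Q - card {p, q})"
    using chain[of Q "Eset Q A B Q" n A B, OF fin step E0] p qQ by blast
  have c2: "card {p, q} = 2" using qp by simp
  define w where "w = W @ [True]"
  have "\<forall>x\<in>Q. run A B w x = q"
  proof
    fix x assume "x \<in> Q"
    then have "run A B W x \<in> {p, q}" using W(1) by blast
    moreover have "A q = q" using fx qQ qp by blast
    ultimately show "run A B w x = q" unfolding w_def q_def by (auto simp: run_snoc)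
  qed
  then have rq: "\<forall>x\<in>Q. run A B w x = q" .
  have "run A B w p = q" using rq p(1) by blast
  then have "q \<in> run A B w ` Q" using p(1) by (metis image_eqI)
  then have "run A B w ` Q = {q}" using rq by auto
  moreover have "length w \<le> (card Q - 1)^2"
  proof -
    obtain k where k: "n = k + 2" using two unfolding n_def by (metis add.commute le_Suc_ex)
    have "length w \<le> n * (n - 2) + 1" using W(2) c2 unfolding w_def n_def by simp
    also have "\<dots> = (n - 1)^2" unfolding k by (simp add: power2_eq_square)
    finally show ?thesis unfolding n_def .
  qed
  ultimately show ?thesis by (intro exI[of _ w]) simp
qed

definition blk :: "bool \<Rightarrow> bool list" where
  "blk c = (if c then [True, False] else [False])"

definition expand :: "bool list \<Rightarrow> bool list" where
  "expand bl = concat (map blk bl)"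

lemma expand_Nil[simp]: "expand [] = []" by (simp add: expand_def)
lemma expand_Cons[simp]: "expand (c # bl) = blk c @ expand bl" by (simp add: expand_def)
lemma expand_snoc: "expand (bl @ [c]) = expand bl @ blk c" by (simp add: expand_def)
lemma run_blk: "run A B (blk c) x = (if c then B (A x) else B x)" by (simp add: blk_def)
lemma length_blk: "length (blk c) = (if c then 2 else 1)" by (simp add: blk_def)

lemma normalize:
  assumes clA: "A ` Q \<subseteq> Q" and clB: "B ` Q \<subseteq> Q" and idem: "\<forall>x\<in>Q. A (A x) = A x"
  shows "\<exists>bl tf. \<forall>x\<in>Q. run A B w x =
     (if tf then A (run A B (expand bl) x) else run A B (expand bl) x)"
proof (induction w rule: rev_induct)
  case Nil
  show ?case by (intro exI[of _ "[]"] exI[of _ False]) simp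
next
  case (snoc c w)
  obtain bl tf where IH: "\<forall>x\<in>Q. run A B w x =
     (if tf then A (run A B (expand bl) x) else run A B (expand bl) x)" using snoc by blast
  have rQ: "run A B (expand bl) x \<in> Q" if "x \<in> Q" for x using run_closed[OF clA clB that] .
  show ?case
  proof (cases c)
    case True
    have "\<forall>x\<in>Q. run A B (w @ [c]) x = A (run A B (expand bl) x)"
    proof
      fix x assume x: "x \<in> Q"
      have "run A B (w @ [c]) x = A (run A B w x)" using True by (simp add: run_snoc)
      also have "\<dots> = A (run A B (expand bl) x)" using IH x idem rQ[OF x] by auto
      finally show "run A B (w @ [c]) x = A (run A B (expand bl) x)" .
    qed
    then show ?thesis by (intro exI[of _ bl] exI[of _ True]) simp
  next
    case False
    show ?thesis
    proof (cases tf)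
      case True
      have "\<forall>x\<in>Q. run A B (w @ [c]) x = run A B (expand (bl @ [True])) x"
      proof
        fix x assume x: "x \<in> Q"
        have "run A B (w @ [c]) x = B (run A B w x)" using False by (simp add: run_snoc)
        also have "\<dots> = B (A (run A B (expand bl) x))" using IH x True by auto
        also have "\<dots> = run A B (expand (bl @ [True])) x" by (simp add: expand_snoc run_blk)
        finally show "run A B (w @ [c]) x = run A B (expand (bl @ [True])) x" .
      qed
      then show ?thesis by (intro exI[of _ "bl @ [True]"] exI[of _ False]) simp
    next
      case tfF: False
      have "\<forall>x\<in>Q. run A B (w @ [c]) x = run A B (expand (bl @ [False])) x"
      proof
        fix x assume x: "x \<in> Q"
        have "run A B (w @ [c]) x = B (run A B w x)" using False by (simp add: run_snoc)
        also have "\<dots> = B (run A B (expand bl) x)" using IH x tfF by auto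
        also have "\<dots> = run A B (expand (bl @ [False])) x" by (simp add: expand_snoc run_blk)
        finally show "run A B (w @ [c]) x = run A B (expand (bl @ [False])) x" .
      qed
      then show ?thesis by (intro exI[of _ "bl @ [False]"] exI[of _ False]) simp
    qed
  qed
qed

lemma periodic_sum_shift:
  fixes h :: "nat \<Rightarrow> int"
  assumes per: "\<forall>i. h (i + P) = h i"
  shows "sum (\<lambda>i. h (i + r)) {1..<P+1} = sum h {1..<P+1}"
proof (induction r)
  case 0
  then show ?case by simp
next
  case (Suc r)
  define g where "g = (\<lambda>i. h (i + r))"
  have gper: "g (P + 1) = g 1" unfolding g_def using per[rule_format, of "1 + r"]
    by (simp add: add.commute add.left_commute)
  have s1: "sum g {1..<Suc (P + 1)} = sum g {1..<P+1} + g (P + 1)"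
    by (rule sum.atLeastLessThan_Suc) simp
  have s2: "sum g {1..<Suc (P + 1)} = g 1 + sum g {Suc 1..<Suc (P + 1)}"
    by (rule sum.atLeast_Suc_lessThan) simp
  have s3: "sum g {Suc 1..<Suc (P + 1)} = sum (\<lambda>i. g (Suc i)) {1..<P+1}"
    by (rule sum.shift_bounds_Suc_ivl)
  have "sum (\<lambda>i. h (i + Suc r)) {1..<P+1} = sum (\<lambda>i. g (Suc i)) {1..<P+1}"
    unfolding g_def by simp
  also have "\<dots> = sum g {1..<P+1}" using s1 s2 s3 gper by simp
  also have "\<dots> = sum h {1..<P+1}" using Suc unfolding g_def .
  finally show ?case .
qed


lemma fam_blocks:
  assumes fin: "finite Q'" and sQ: "s ` Q' \<subseteq> Q'" and inj: "inj_on s Q'"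
    and pQ: "p \<in> Q'" and yQ: "y \<in> Q'" and py: "p \<noteq> y"
    and star: "\<forall>j. (s ^^ j) p = p \<longrightarrow> (s ^^ j) y = y"
    and sdef: "\<forall>x\<in>Q'. B (A x) = s x"
    and Bdef: "\<forall>x\<in>Q'. B x = s (if x = p then y else x)"
    and G: "Gp s p y T" and TQ: "T \<subseteq> Q'"
  shows "Gp s p y {x\<in>Q'. run A B (expand bl) x \<in> T} \<and> card {x\<in>Q'. run A B (expand bl) x \<in> T} \<le> card T"
proof (induction bl)
  case Nil
  have "{x\<in>Q'. run A B (expand []) x \<in> T} = T" using TQ by auto
  then show ?case using G by simp
next
  case (Cons c bl)
  define T' where "T' = {x\<in>Q'. run A B (expand bl) x \<in> T}"
  have T'Q: "T' \<subseteq> Q'" unfolding T'_def by auto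
  have GT': "Gp s p y T'" and cT': "card T' \<le> card T" using Cons unfolding T'_def by auto
  define e where "e = (\<lambda>x. if x = p then y else x)"
  have e: "\<forall>x\<in>Q'. e x = (if x = p then y else x)" unfolding e_def by simp
  show ?case
  proof (cases c)
    case True
    have eq: "{x\<in>Q'. run A B (expand (c # bl)) x \<in> T} = {x\<in>Q'. s x \<in> T'}"
    proof (intro equalityI subsetI)
      fix x assume x: "x \<in> {x\<in>Q'. run A B (expand (c # bl)) x \<in> T}"
      then have xQ: "x \<in> Q'" by blast
      have "run A B (expand (c # bl)) x = run A B (expand bl) (s x)"
        using True sdef xQ by (simp add: run_blk)
      then show "x \<in> {x\<in>Q'. s x \<in> T'}" using x sQ xQ unfolding T'_def by auto
    next
      fix x assume x: "x \<in> {x\<in>Q'. s x \<in> T'}"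
      then have xQ: "x \<in> Q'" by blast
      have "run A B (expand (c # bl)) x = run A B (expand bl) (s x)"
        using True sdef xQ by (simp add: run_blk)
      then show "x \<in> {x\<in>Q'. run A B (expand (c # bl)) x \<in> T}" using x xQ unfolding T'_def by auto
    qed
    have "Gp s p y {x\<in>Q'. s x \<in> T'} \<and> card {x\<in>Q'. s x \<in> T'} \<le> card T'"
      by (rule fam_sigma[OF sQ inj fin pQ yQ GT' T'Q])
    then show ?thesis unfolding eq using cT' by auto
  next
    case False
    define T'' where "T'' = {x\<in>Q'. s x \<in> T'}"
    have T''Q: "T'' \<subseteq> Q'" unfolding T''_def by auto
    have GT'': "Gp s p y T''" and cT'': "card T'' \<le> card T'"
      using fam_sigma[OF sQ inj fin pQ yQ GT' T'Q] unfolding T''_def by auto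
    have eQ: "e x \<in> Q'" if "x \<in> Q'" for x using that yQ unfolding e_def by auto
    have eq: "{x\<in>Q'. run A B (expand (c # bl)) x \<in> T} = {x\<in>Q'. e x \<in> T''}"
    proof (intro equalityI subsetI)
      fix x assume x: "x \<in> {x\<in>Q'. run A B (expand (c # bl)) x \<in> T}"
      then have xQ: "x \<in> Q'" by blast
      have "run A B (expand (c # bl)) x = run A B (expand bl) (s (e x))"
        using False Bdef xQ unfolding e_def by (simp add: run_blk)
      then show "x \<in> {x\<in>Q'. e x \<in> T''}" using x sQ xQ eQ[OF xQ] unfolding T'_def T''_def by auto
    next
      fix x assume x: "x \<in> {x\<in>Q'. e x \<in> T''}"
      then have xQ: "x \<in> Q'" by blast
      have "run A B (expand (c # bl)) x = run A B (expand bl) (s (e x))"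
        using False Bdef xQ unfolding e_def by (simp add: run_blk)
      then show "x \<in> {x\<in>Q'. run A B (expand (c # bl)) x \<in> T}"
        using x xQ unfolding T'_def T''_def by auto
    qed
    have "Gp s p y {x\<in>Q'. e x \<in> T''} \<and> card {x\<in>Q'. e x \<in> T''} \<le> card T''"
      by (rule fam_e[OF pQ yQ py e star GT'' T''Q fin sQ])
    then show ?thesis unfolding eq using cT' cT'' by auto
  qed
qed


fun wdf :: "(nat \<Rightarrow> bool) \<Rightarrow> nat \<Rightarrow> bool list" where
  "wdf b 0 = []"
| "wdf b (Suc k) = blk (b (Suc k)) @ wdf b k"

lemma length_wdf: "length (wdf b k) = k + card ({1..<Suc k} \<inter> {i. b i})"
proof (induction k)
  case 0
  then show ?case by simp
next
  case (Suc k)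
  have e: "{1..<Suc (Suc k)} = insert (Suc k) {1..<Suc k}" by auto
  have nin: "Suc k \<notin> {1..<Suc k}" by simp
  have "card ({1..<Suc (Suc k)} \<inter> {i. b i}) = card ({1..<Suc k} \<inter> {i. b i}) + (if b (Suc k) then 1 else 0)"
    unfolding e using nin by (cases "b (Suc k)") (auto simp: Int_insert_left)
  then show ?case using Suc by (simp add: length_blk)
qed

lemma hard_case:
  assumes fin: "finite Q" and two: "card Q \<ge> 2" and clA: "A ` Q \<subseteq> Q" and clB: "B ` Q \<subseteq> Q"
    and p: "p \<in> Q" "A p \<noteq> p" and fx: "\<forall>x\<in>Q. x \<noteq> p \<longrightarrow> A x = x"
    and injp: "inj_on B (Q - {p})" and y: "y \<in> Q" "y \<noteq> p" "y \<noteq> A p" "B y = B p"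
    and qn: "A p \<notin> B ` Q" and sy: "syn Q A B"
  shows "\<exists>w. card (run A B w ` Q) = 1 \<and> length w \<le> (card Q - 1)^2"
proof -
  define q where "q = A p"
  define Q' where "Q' = Q - {q}"
  define s where "s = (\<lambda>x. B (A x))"
  define n where "n = card Q"
  have qQ: "q \<in> Q" using clA p unfolding q_def by blast
  have qp: "q \<noteq> p" using p unfolding q_def by simp
  have finQ': "finite Q'" unfolding Q'_def using fin by simp
  have Q'Q: "Q' \<subseteq> Q" unfolding Q'_def by blast
  have pQ': "p \<in> Q'" unfolding Q'_def using p(1) qp by simp
  have yQ': "y \<in> Q'" unfolding Q'_def q_def using y(1,3) by simp
  have BQ': "B x \<in> Q'" if "x \<in> Q" for x
  proof -
    have "B x \<in> B ` Q" using that by (rule imageI)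
    then have "B x \<noteq> q" using qn unfolding q_def by metis
    moreover have "B x \<in> Q" using clB that by blast
    ultimately show ?thesis unfolding Q'_def by blast
  qed
  have Aq: "A q = q" using fx qQ qp by blast
  have idem: "\<forall>x\<in>Q. A (A x) = A x"
  proof
    fix x assume x: "x \<in> Q"
    show "A (A x) = A x"
    proof (cases "x = p")
      case True
      then show ?thesis using Aq unfolding q_def by simp
    next
      case False
      then show ?thesis using fx x by simp
    qed
  qed
  have sQ: "s ` Q' \<subseteq> Q'"
  proof
    fix t assume "t \<in> s ` Q'"
    then obtain x where x: "x \<in> Q'" "t = s x" by blast
    have "A x \<in> Q" using x clA Q'Q by blast
    then show "t \<in> Q'" using BQ' x unfolding s_def by simp
  qed
  have AQp: "A x \<in> Q - {p}" if "x \<in> Q" for x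
  proof (cases "x = p")
    case True
    then show ?thesis using qQ qp unfolding q_def by simp
  next
    case False
    then show ?thesis using fx that by simp
  qed
  have injs: "inj_on s Q'"
  proof (rule inj_onI)
    fix u v assume u: "u \<in> Q'" and v: "v \<in> Q'" and uv: "s u = s v"
    have uQ: "u \<in> Q" and vQ: "v \<in> Q" using u v Q'Q by blast+
    have "B (A u) = B (A v)" using uv unfolding s_def .
    then have Auv: "A u = A v" by (rule inj_onD[OF injp _ AQp[OF uQ] AQp[OF vQ]])
    show "u = v"
    proof (cases "u = p")
      case True
      show ?thesis
      proof (rule ccontr)
        assume "u \<noteq> v"
        then have "v \<noteq> p" using True by simp
        then have "A v = v" using fx vQ by blast
        then have "v = q" using Auv True unfolding q_def by simp
        then show False using v unfolding Q'_def by blast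
      qed
    next
      case False
      then have Au: "A u = u" using fx uQ by blast
      show ?thesis
      proof (cases "v = p")
        case True
        then have "u = q" using Auv Au unfolding q_def by simp
        then show ?thesis using u unfolding Q'_def by blast
      next
        case False
        then have "A v = v" using fx vQ by blast
        then show ?thesis using Auv Au by simp
      qed
    qed
  qed
  have sdef: "\<forall>x\<in>Q'. B (A x) = s x" unfolding s_def by simp
  have Bdef: "\<forall>x\<in>Q'. B x = s (if x = p then y else x)"
  proof
    fix x assume x: "x \<in> Q'"
    show "B x = s (if x = p then y else x)"
    proof (cases "x = p")
      case True
      have "A y = y" using fx y by blast
      then show ?thesis using True y(4) unfolding s_def by simp
    next
      case False
      then have "A x = x" using fx x Q'Q by blast
      then show ?thesis using False unfolding s_def by simp
    qed
  qed
  have cQ': "card Q' = n - 1" unfolding Q'_def n_def using fin qQ by simp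
  have BQ: "B ` Q = Q'"
  proof -
    have BQ2: "B ` Q = B ` (Q - {p})"
    proof
      show "B ` Q \<subseteq> B ` (Q - {p})"
      proof
        fix t assume "t \<in> B ` Q"
        then obtain z where z: "z \<in> Q" "t = B z" by blast
        show "t \<in> B ` (Q - {p})"
        proof (cases "z = p")
          case True
          then have "t = B y" using z y by simp
          then show ?thesis using y by blast
        next
          case False
          then show ?thesis using z by blast
        qed
      qed
    qed blast
    have "card (B ` Q) = n - 1" unfolding BQ2 n_def using card_image[OF injp] p fin by simp
    have "B ` Q \<subseteq> Q'" using BQ' by blast
    moreover have "card (B ` Q) = card Q'" using \<open>card (B ` Q) = n - 1\<close> cQ' by simp
    ultimately show ?thesis using card_subset_eq[OF finQ'] by blast
  qed
  have cov: "Q \<subseteq> B ` Q \<union> {A p}" unfolding BQ Q'_def q_def by blast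
  have starorb: "(\<forall>j. (s ^^ j) p = p \<longrightarrow> (s ^^ j) y = y) \<and> ((\<exists>i. (s ^^ i) y = p) \<or> s y = y)"
  proof (cases "\<exists>i. (s ^^ i) y = p")
    case True
    then obtain i where i: "(s ^^ i) y = p" by blast
    have "\<forall>j. (s ^^ j) p = p \<longrightarrow> (s ^^ j) y = y"
    proof (intro allI impI)
      fix j assume j: "(s ^^ j) p = p"
      have "(s ^^ i) ((s ^^ j) y) = (s ^^ j) ((s ^^ i) y)" by (rule funpow_comm)
      also have "\<dots> = (s ^^ i) y" using i j by simp
      finally have "(s ^^ i) ((s ^^ j) y) = (s ^^ i) y" .
      moreover have "(s ^^ j) y \<in> Q'" using funpow_closed[OF sQ yQ'] .
      ultimately show "(s ^^ j) y = y"
        using inj_onD[OF funpow_inj[OF injs sQ, of i]] yQ' by blast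
    qed
    then show ?thesis using True by blast
  next
    case False
    define Orb where "Orb = {t. \<exists>i. (s ^^ i) y = t}"
    have OQ': "Orb \<subseteq> Q'" unfolding Orb_def using funpow_closed[OF sQ yQ'] by blast
    have OQ: "Orb \<subseteq> Q" using OQ' Q'Q by blast
    have pO: "p \<notin> Orb" using False unfolding Orb_def by blast
    have Os: "s ` Orb \<subseteq> Orb"
    proof
      fix t assume "t \<in> s ` Orb"
      then obtain i where "t = s ((s ^^ i) y)" unfolding Orb_def by blast
      then have "(s ^^ Suc i) y = t" by simp
      then show "t \<in> Orb" unfolding Orb_def by blast
    qed
    have Aid: "\<forall>t\<in>Orb. A t = t"
    proof
      fix t assume t: "t \<in> Orb"
      then have "t \<in> Q" "t \<noteq> p" using OQ pO by blast+
      then show "A t = t" using fx by blast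
    qed
    have Bs: "\<forall>t\<in>Orb. B t = s t"
    proof
      fix t assume t: "t \<in> Orb"
      then have "t \<in> Q'" "t \<noteq> p" using OQ' pO by blast+
      then show "B t = s t" using Bdef by simp
    qed
    have OA: "A ` Orb \<subseteq> Orb" using Aid by auto
    have OB: "B ` Orb \<subseteq> Orb" using Bs Os by auto
    have iA: "inj_on A Orb" using Aid by (auto simp: inj_on_def)
    have iB: "inj_on B Orb"
    proof -
      have "inj_on s Orb" using injs OQ' by (rule inj_on_subset)
      then show ?thesis using Bs by (simp add: inj_on_def)
    qed
    have cO: "card Orb \<le> 1" using closed_inj_card[OF OQ fin OA OB iA iB sy] .
    have fO: "finite Orb" using OQ fin by (rule finite_subset)
    have O1: "\<forall>a\<in>Orb. \<forall>b\<in>Orb. a = b" using card_le_Suc0_iff_eq[OF fO] cO by simp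
    have y0: "y \<in> Orb" unfolding Orb_def by (intro CollectI exI[of _ 0]) simp
    have "s y \<in> Orb" using Os y0 by blast
    from O1[rule_format, OF this y0] have sy: "s y = y" .
    then have "\<forall>j. (s ^^ j) p = p \<longrightarrow> (s ^^ j) y = y" using funpow_fix[of s y] by blast
    then show ?thesis using sy by blast
  qed
  have star: "\<forall>j. (s ^^ j) p = p \<longrightarrow> (s ^^ j) y = y" using starorb by blast
  have orb: "(\<exists>i. (s ^^ i) y = p) \<or> s y = y" using starorb by blast
  obtain P where P: "1 \<le> P" "P \<le> card Q'" "(s ^^ P) p = p"
    using period_exists[OF finQ' sQ injs pQ'] by blast
  have Py: "(s ^^ P) y = y" using star P(3) by blast
  have sinkQ': "\<forall>z\<in>Q. A z = z \<and> B z = z \<longrightarrow> z \<in> Q'"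
  proof (intro ballI impI)
    fix z assume "z \<in> Q" "A z = z \<and> B z = z"
    then show "z \<in> Q'" using BQ'[of z] by simp
  qed
  have step: "\<exists>u. length u \<le> n \<and> card {x\<in>Q'. run A B u x \<in> S} > card S \<and>
      Eset Q A B Q' {x\<in>Q'. run A B u x \<in> S}"
    if E: "Eset Q A B Q' S" and SQ: "S \<subseteq> Q'" and SnQ: "S \<noteq> Q'" for S
  proof -
    obtain w0 where w0: "\<forall>x\<in>Q. run A B w0 x \<in> S"
      using Eset_ext[OF fin clA clB p(1) fx injp cov sy E Q'Q] by blast
    obtain bl tf where nb: "\<forall>x\<in>Q. run A B w0 x =
       (if tf then A (run A B (expand bl) x) else run A B (expand bl) x)"
      using normalize[OF clA clB idem] by blast
    have allin: "\<forall>x\<in>Q'. run A B (expand bl) x \<in> S"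
    proof
      fix x assume xQ': "x \<in> Q'"
      then have x: "x \<in> Q" using Q'Q by blast
      define r where "r = run A B (expand bl) x"
      have rQ: "r \<in> Q" unfolding r_def using run_closed[OF clA clB x] .
      have w0x: "run A B w0 x \<in> S" using w0 x by blast
      show "run A B (expand bl) x \<in> S"
      proof (cases tf)
        case True
        then have ArS: "A r \<in> S" using w0x nb x unfolding r_def by simp
        have "r \<noteq> p"
        proof
          assume "r = p"
          then have "q \<in> S" using ArS unfolding q_def by simp
          then show False using SQ unfolding Q'_def by blast
        qed
        then have "A r = r" using fx rQ by blast
        then show ?thesis using ArS unfolding r_def by simp
      next
        case False
        then show ?thesis using w0x nb x by simp
      qed
    qed
    have goodex: "\<exists>j. (s ^^ j) y \<in> S \<and> (s ^^ j) p \<notin> S"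
    proof (rule ccontr)
      assume "\<not> ?thesis"
      then have G: "Gp s p y S" unfolding Gp_def by blast
      have "card {x\<in>Q'. run A B (expand bl) x \<in> S} \<le> card S"
        using fam_blocks[OF finQ' sQ injs pQ' yQ' y(2)[symmetric] star sdef Bdef G SQ] by blast
      moreover have "{x\<in>Q'. run A B (expand bl) x \<in> S} = Q'" using allin by blast
      ultimately have "card Q' \<le> card S" by simp
      moreover have "card S \<le> card Q'" using card_mono[OF finQ' SQ] .
      ultimately have "card S = card Q'" by (rule le_antisym[rotated])
      then have "S = Q'" by (rule card_subset_eq[OF finQ' SQ])
      then show False using SnQ by simp
    qed
    define Good where "Good = (\<lambda>i. (s ^^ i) y \<in> S \<and> (s ^^ i) p \<notin> S)"
    define Bad where "Bad = (\<lambda>i. (s ^^ i) p \<in> S \<and> (s ^^ i) y \<notin> S)"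
    have goodP: "\<exists>i. 1 \<le> i \<and> i \<le> P \<and> Good i"
    proof -
      obtain j where j: "(s ^^ j) y \<in> S" "(s ^^ j) p \<notin> S" using goodex by blast
      define k where "k = j mod P"
      have kP: "k < P" unfolding k_def using P(1) by simp
      have ky: "(s ^^ k) y \<in> S" using j(1) funpow_mod[OF Py, of j] unfolding k_def by simp
      have kp: "(s ^^ k) p \<notin> S" using j(2) funpow_mod[OF P(3), of j] unfolding k_def by simp
      show ?thesis
      proof (cases "k = 0")
        case True
        then have "Good P" using ky kp P(3) Py unfolding Good_def by simp
        then show ?thesis using P(1) by blast
      next
        case False
        then have "Good k" using ky kp unfolding Good_def by simp
        then show ?thesis using False kP by (intro exI[of _ k]) simp
      qed
    qed
    define m where "m = (LEAST i. 1 \<le> i \<and> Good i)"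
    have mex: "\<exists>i. 1 \<le> i \<and> Good i" using goodP by blast
    have m1: "1 \<le> m" and mG: "Good m" using LeastI_ex[OF mex] unfolding m_def by blast+
    have mP: "m \<le> P"
    proof -
      obtain i where i: "1 \<le> i" "i \<le> P" "Good i" using goodP by blast
      have "m \<le> i" unfolding m_def using i by (intro Least_le) simp
      then show ?thesis using i by simp
    qed
    have mleast: "\<not> Good i" if "1 \<le> i" "i < m" for i
      using not_less_Least[of i "\<lambda>i. 1 \<le> i \<and> Good i"] that unfolding m_def by blast
    have wdV: "\<forall>z\<in>Q'. (run A B (wdf Bad k) z \<in> S) = ((s ^^ k) z \<in> S)" if "k < m" for k
      using that
    proof (induction k)
      case 0
      then show ?case by simp
    next
      case (Suc k)
      have IH: "\<forall>z\<in>Q'. (run A B (wdf Bad k) z \<in> S) = ((s ^^ k) z \<in> S)" using Suc by simp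
      show ?case
      proof
        fix z assume zQ': "z \<in> Q'"
        have zQ: "z \<in> Q" using zQ' Q'Q by blast
        have r1: "run A B (wdf Bad (Suc k)) z = run A B (wdf Bad k) (run A B (blk (Bad (Suc k))) z)"
          by simp
        have inQ': "run A B (blk (Bad (Suc k))) z \<in> Q'"
          using BQ'[OF zQ] BQ'[OF AQp[OF zQ, THEN DiffD1]] by (simp add: run_blk)
        show "(run A B (wdf Bad (Suc k)) z \<in> S) = ((s ^^ Suc k) z \<in> S)"
        proof (cases "Bad (Suc k)")
          case True
          have "run A B (blk (Bad (Suc k))) z = s z" using True unfolding s_def by (simp add: run_blk)
          moreover have "(s ^^ k) (s z) = (s ^^ Suc k) z" by (simp add: funpow_swap1)
          ultimately show ?thesis using r1 IH inQ' by simp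
        next
          case False
          have bz: "run A B (blk (Bad (Suc k))) z = s (if z = p then y else z)"
            using False Bdef zQ' by (simp add: run_blk)
          have ng: "\<not> Good (Suc k)" using mleast Suc.prems by simp
          show ?thesis
          proof (cases "z = p")
            case True
            have "(s ^^ k) (s y) = (s ^^ Suc k) y" by (simp add: funpow_swap1)
            moreover have "((s ^^ Suc k) y \<in> S) = ((s ^^ Suc k) p \<in> S)"
              using ng False unfolding Good_def Bad_def by blast
            ultimately show ?thesis using r1 IH inQ' bz True by simp
          next
            case zp: False
            have "(s ^^ k) (s z) = (s ^^ Suc k) z" by (simp add: funpow_swap1)
            then show ?thesis using r1 IH inQ' bz zp by simp
          qed
        qed
      qed
    qed
    define u where "u = blk False @ wdf Bad (m - 1)"
    define V where "V = {x\<in>Q'. (s ^^ m) x \<in> S}"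
    have pV: "p \<notin> V" using mG unfolding V_def Good_def by simp
    have eqset: "{x\<in>Q'. run A B u x \<in> S} = insert p V"
    proof -
      have key: "(run A B u x \<in> S) = ((s ^^ m) (if x = p then y else x) \<in> S)" if xQ': "x \<in> Q'" for x
      proof -
        have xQ: "x \<in> Q" using xQ' Q'Q by blast
        have "run A B u x = run A B (wdf Bad (m - 1)) (B x)" unfolding u_def by (simp add: run_blk)
        then have "(run A B u x \<in> S) = ((s ^^ (m - 1)) (B x) \<in> S)"
          using wdV[of "m - 1"] m1 BQ'[OF xQ] by simp
        also have "(s ^^ (m - 1)) (B x) = (s ^^ (m - 1)) (s (if x = p then y else x))"
          using Bdef xQ' by simp
        also have "\<dots> = (s ^^ m) (if x = p then y else x)"
        proof -
          have "(s ^^ (m - 1)) (s (if x = p then y else x)) = (s ^^ Suc (m - 1)) (if x = p then y else x)"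
            by (simp add: funpow_swap1)
          then show ?thesis using m1 by simp
        qed
        finally show ?thesis .
      qed
      show ?thesis
      proof (intro equalityI subsetI)
        fix x assume x: "x \<in> {x\<in>Q'. run A B u x \<in> S}"
        then have xQ': "x \<in> Q'" by blast
        show "x \<in> insert p V"
        proof (cases "x = p")
          case False
          then show ?thesis using key[OF xQ'] x unfolding V_def by simp
        qed simp
      next
        fix x assume x: "x \<in> insert p V"
        show "x \<in> {x\<in>Q'. run A B u x \<in> S}"
        proof (cases "x = p")
          case True
          then show ?thesis using key[OF pQ'] mG pQ' unfolding Good_def by simp
        next
          case False
          then have xV: "x \<in> V" using x by blast
          then have xQ': "x \<in> Q'" unfolding V_def by blast
          then show ?thesis using key[OF xQ'] xV False unfolding V_def by simp
        qed
      qed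
    qed
    have cV: "card V = card S"
    proof -
      have i: "inj_on (s ^^ m) V" using funpow_inj[OF injs sQ, of m] unfolding V_def
        by (rule inj_on_subset) blast
      have "(s ^^ m) ` V = S"
      proof
        show "(s ^^ m) ` V \<subseteq> S" unfolding V_def by blast
        show "S \<subseteq> (s ^^ m) ` V"
        proof
          fix t assume t: "t \<in> S"
          then have "t \<in> (s ^^ m) ` Q'" using funpow_image[OF finQ' injs sQ, of m] SQ by blast
          then obtain x where "x \<in> Q'" "t = (s ^^ m) x" by blast
          then show "t \<in> (s ^^ m) ` V" using t unfolding V_def by blast
        qed
      qed
      then show ?thesis using card_image[OF i] by simp
    qed
    have fV: "finite V" unfolding V_def using finQ' by simp
    have cnew: "card {x\<in>Q'. run A B u x \<in> S} = card S + 1"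
      unfolding eqset using pV fV cV by simp
    define cnt where "cnt = card ({1..<m} \<inter> {i. Bad i})"
    have lu: "length u = m + cnt"
    proof -
      have "length u = 1 + ((m - 1) + card ({1..<Suc (m - 1)} \<inter> {i. Bad i}))"
        unfolding u_def by (simp add: length_blk length_wdf)
      also have "Suc (m - 1) = m" using m1 by simp
      finally show ?thesis unfolding cnt_def using m1 by simp
    qed
    have cntb: "m + cnt \<le> P + 1"
    proof (cases "s y = y")
      case True
      have fy: "(s ^^ i) y = y" for i using funpow_fix[of s y, OF True] .
      have yS: "y \<in> S" using mG fy[of m] unfolding Good_def by simp
      have "\<not> Bad i" for i using yS fy[of i] unfolding Bad_def by simp
      then have "{1..<m} \<inter> {i. Bad i} = {}" by blast
      then have "cnt = 0" unfolding cnt_def by simp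
      then show ?thesis using mP by simp
    next
      case False
      then obtain i0 where i0: "(s ^^ i0) y = p" using orb by blast
      define h :: "nat \<Rightarrow> int" where "h = (\<lambda>i. of_bool ((s ^^ i) y \<in> S))"
      have hper: "\<forall>i. h (i + P) = h i"
      proof
        fix i
        have "(s ^^ (i + P)) y = (s ^^ i) ((s ^^ P) y)" by (simp add: funpow_add)
        then show "h (i + P) = h i" unfolding h_def using Py by simp
      qed
      have hp: "of_bool ((s ^^ i) p \<in> S) = h (i + i0)" for i
      proof -
        have "(s ^^ (i + i0)) y = (s ^^ i) ((s ^^ i0) y)" by (simp add: funpow_add)
        then show ?thesis unfolding h_def using i0 by simp
      qed
      define D :: "nat \<Rightarrow> int" where "D = (\<lambda>i. of_bool ((s ^^ i) y \<in> S) - of_bool ((s ^^ i) p \<in> S))"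
      have sum0: "sum D {1..<P+1} = 0"
      proof -
        have "sum D {1..<P+1} = sum h {1..<P+1} - sum (\<lambda>i. of_bool ((s ^^ i) p \<in> S)) {1..<P+1}"
          unfolding D_def h_def by (simp add: sum_subtractf)
        also have "sum (\<lambda>i. of_bool ((s ^^ i) p \<in> S) :: int) {1..<P+1} = sum (\<lambda>i. h (i + i0)) {1..<P+1}"
          using hp by simp
        also have "\<dots> = sum h {1..<P+1}" using periodic_sum_shift[OF hper] .
        finally show ?thesis by simp
      qed
      have split: "sum D {1..<m} + sum D {m..<P+1} = sum D {1..<P+1}"
        by (rule sum.atLeastLessThan_concat) (use m1 mP in auto)
      have first: "sum D {1..<m} = - of_nat cnt"
      proof -
        have "sum D {1..<m} = sum (\<lambda>i. - of_bool (Bad i)) {1..<m}"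
        proof (rule sum.cong)
          fix i assume "i \<in> {1..<m}"
          then have "\<not> Good i" using mleast by simp
          then show "D i = - of_bool (Bad i)" unfolding D_def Good_def Bad_def by auto
        qed simp
        also have "\<dots> = - sum (\<lambda>i. of_bool (Bad i)) {1..<m}" by (simp add: sum_negf)
        also have "sum (\<lambda>i. of_bool (Bad i) :: int) {1..<m} = of_nat cnt"
          unfolding cnt_def by simp
        finally show ?thesis .
      qed
      have second: "sum D {m..<P+1} \<le> of_nat (P + 1 - m)"
      proof -
        have "sum D {m..<P+1} \<le> of_nat (card {m..<P+1}) * 1"
          by (rule sum_bounded_above) (simp add: D_def)
        then show ?thesis by simp
      qed
      have "int cnt \<le> int (P + 1 - m)" using sum0 split first second by linarith
      then show ?thesis using mP by linarith
    qed
    have "length u \<le> n"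
    proof -
      have "P + 1 \<le> n" using P(2) cQ' two unfolding n_def by simp
      then show ?thesis using lu cntb by simp
    qed
    moreover have "Eset Q A B Q' {x\<in>Q'. run A B u x \<in> S}"
      by (rule Eset_pre[OF E _ sinkQ']) (use cnew in simp)
    ultimately show ?thesis using cnew by (intro exI[of _ u]) simp
  qed
  obtain s0 where s0Q': "s0 \<in> Q'" and E0: "Eset Q A B Q' {s0}"
  proof (cases "\<exists>z\<in>Q. A z = z \<and> B z = z")
    case True
    then obtain z where z: "z \<in> Q" "A z = z" "B z = z" by blast
    have uniq: "z' \<in> {z}" if z': "z' \<in> Q" "A z' = z' \<and> B z' = z'" for z'
    proof -
      obtain w where w: "card (run A B w ` Q) = 1" using sy unfolding syn_def by blast
      then obtain t where t: "run A B w ` Q = {t}" using card_1_singletonE by blast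
      have "run A B w z = z" using z(2,3) by (induction w) auto
      moreover have "run A B w z' = z'" using z'(2) by (induction w) auto
      moreover have "run A B w z \<in> {t}" "run A B w z' \<in> {t}" using t z(1) z'(1) by blast+
      ultimately show ?thesis by simp
    qed
    have zQ': "z \<in> Q'" using sinkQ' z by blast
    have "Eset Q A B Q' {z}" unfolding Eset_def using zQ' uniq by blast
    then show ?thesis using that zQ' by blast
  next
    case False
    have "Eset Q A B Q' {p}" unfolding Eset_def using pQ' False by blast
    then show ?thesis using that pQ' by blast
  qed
  obtain W where W: "\<forall>x\<in>Q'. run A B W x \<in> {s0}" "length W \<le> n * (card Q' - card {s0})"
    using chain[of Q' "Eset Q A B Q'" n A B, OF finQ' step E0] s0Q' by blast
  define w where "w = False # W"
  have rw: "\<forall>x\<in>Q. run A B w x = s0"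
  proof
    fix x assume x: "x \<in> Q"
    have "run A B w x = run A B W (B x)" unfolding w_def by simp
    then show "run A B w x = s0" using W(1) BQ'[OF x] by simp
  qed
  have "run A B w p = s0" using rw p(1) by blast
  then have "s0 \<in> run A B w ` Q" using p(1) by (metis image_eqI)
  then have "run A B w ` Q = {s0}" using rw by auto
  moreover have "length w \<le> (card Q - 1)^2"
  proof -
    obtain k where k: "n = k + 2" using two unfolding n_def by (metis add.commute le_Suc_ex)
    have "length w \<le> n * (n - 2) + 1" using W(2) cQ' unfolding w_def by (simp add: numeral_2_eq_2)
    also have "\<dots> = (n - 1)^2" unfolding k by (simp add: power2_eq_square)
    finally show ?thesis unfolding n_def .
  qed
  ultimately show ?thesis by (intro exI[of _ w]) simp
qed

lemma core: "inv_cls Q A B \<Longrightarrow> syn Q A B \<Longrightarrow>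
  \<exists>w. card (run A B w ` Q) = 1 \<and> length w \<le> (card Q - 1)^2"
proof (induction "card Q" arbitrary: Q A B rule: less_induct)
  case less
  from less.prems(1) have fin: "finite Q" and ne: "Q \<noteq> {}" and clA: "A ` Q \<subseteq> Q"
    and clB: "B ` Q \<subseteq> Q" and pex: "\<exists>p\<in>Q. \<forall>x\<in>Q. x \<noteq> p \<longrightarrow> A x = x"
    unfolding inv_cls_def by auto
  have sy: "syn Q A B" by fact
  obtain p where p: "p \<in> Q" and fx: "\<forall>x\<in>Q. x \<noteq> p \<longrightarrow> A x = x" using pex by blast
  have c0: "card Q \<ge> 1" using fin ne by (simp add: Suc_le_eq card_gt_0_iff)
  show ?case
  proof (cases "card Q = 1")
    case True
    then show ?thesis by (intro exI[of _ "[]"]) simp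
  next
    case False
    then have two: "card Q \<ge> 2" using c0 by simp
    have arith: "(card Q - 1 - 1)^2 + 1 \<le> (card Q - 1)^2"
    proof -
      obtain k where k: "card Q = k + 2" using two by (metis add.commute le_Suc_ex)
      show ?thesis unfolding k by (simp add: power2_eq_square)
    qed
    show ?thesis
    proof (cases "\<exists>x\<in>Q. \<exists>y\<in>Q. x \<noteq> y \<and> B x = B y \<and>
        (\<lambda>z. if z = y then x else z) (A x) = (\<lambda>z. if z = y then x else z) (A y)")
      case True
      then obtain x y where xy: "x \<in> Q" "y \<in> Q" "x \<noteq> y" "B x = B y"
        and fA: "(\<lambda>z. if z = y then x else z) (A x) = (\<lambda>z. if z = y then x else z) (A y)" by blast
      define f where "f = (\<lambda>z. if z = y then x else z)"
      note Mf = merge_red[OF less.prems(1) sy xy fA, folded f_def]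
      note M1 = conjunct1[OF Mf]
      note M2 = conjunct1[OF conjunct2[OF Mf]]
      note M3 = conjunct2[OF conjunct2[OF Mf]]
      have lt: "card (Q - {y}) < card Q" using fin xy two by (simp add: card_Diff1_less)
      obtain w where w: "card (run (f \<circ> A) (f \<circ> B) w ` (Q - {y})) = 1"
        "length w \<le> (card (Q - {y}) - 1)^2"
        using less.hyps[OF lt M1 M2] by blast
      have "card (run A B (w @ [False]) ` Q) = 1" using M3 w(1) by blast
      moreover have "length (w @ [False]) \<le> (card Q - 1)^2"
        using w(2) arith fin xy by simp
      ultimately show ?thesis by blast
    next
      case noM: False
      show ?thesis
      proof (cases "\<exists>m\<in>Q. m \<notin> B ` Q \<and> A ` (Q - {m}) \<subseteq> Q - {m}")
        case True
        then obtain m where m: "m \<in> Q" "m \<notin> B ` Q" "A ` (Q - {m}) \<subseteq> Q - {m}" by blast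
        note R = restr_red[OF less.prems(1) sy m two]
        note R1 = conjunct1[OF R]
        note R2 = conjunct1[OF conjunct2[OF R]]
        note R3 = conjunct2[OF conjunct2[OF R]]
        have lt: "card (Q - {m}) < card Q" using fin m two by (simp add: card_Diff1_less)
        obtain w where w: "card (run A B w ` (Q - {m})) = 1"
          "length w \<le> (card (Q - {m}) - 1)^2"
          using less.hyps[OF lt R1 R2] by blast
        have "card (run A B (False # w) ` Q) = 1" using R3 w(1) by blast
        moreover have "length (False # w) \<le> (card Q - 1)^2"
          using w(2) arith fin m by simp
        ultimately show ?thesis by blast
      next
        case noR: False
        have noM2: "\<And>x y. x \<in> Q \<Longrightarrow> y \<in> Q \<Longrightarrow> x \<noteq> y \<Longrightarrow> B x = B y \<Longrightarrow>
           (\<lambda>z. if z = y then x else z) (A x) \<noteq> (\<lambda>z. if z = y then x else z) (A y)"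
          using noM by blast
        show ?thesis
        proof (cases "inj_on B Q")
          case True
          show ?thesis
          proof (cases "A p = p")
            case True
            have idA: "\<forall>x\<in>Q. A x = x" using fx True by auto
            have "inj_on A Q" by (auto simp: inj_on_def idA)
            moreover have "A ` Q \<subseteq> Q" by fact
            ultimately have "card Q \<le> 1"
              using closed_inj_card[of Q Q A B] fin clB \<open>inj_on B Q\<close> sy by blast
            then show ?thesis using two by simp
          next
            case False
            show ?thesis using perm_case[OF fin two clA clB p False fx \<open>inj_on B Q\<close> sy] .
          qed
        next
          case ninj: False
          then obtain x y where xy: "x \<in> Q" "y \<in> Q" "x \<noteq> y" "B x = B y"
            unfolding inj_on_def by blast
          have injp: "inj_on B (Q - {p})"
          proof (rule inj_onI)
            fix u v assume uv: "u \<in> Q - {p}" "v \<in> Q - {p}" "B u = B v"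
            show "u = v"
            proof (rule ccontr)
              assume "u \<noteq> v"
              then show False using noM2[of u v] uv fx by auto
            qed
          qed
          obtain y0 where y0: "y0 \<in> Q" "y0 \<noteq> p" "B y0 = B p"
          proof -
            have "x = p \<or> y = p"
            proof (rule ccontr)
              assume "\<not> (x = p \<or> y = p)"
              then show False using injp xy unfolding inj_on_def by auto
            qed
            then show ?thesis using that xy by auto
          qed
          have Ap: "A p \<noteq> p"
          proof
            assume h: "A p = p"
            have "A y0 = y0" using fx y0 by auto
            then show False using noM2[of p y0] y0 p h by auto
          qed
          have yq: "y0 \<noteq> A p"
          proof
            assume h: "y0 = A p"
            have "A y0 = y0" using fx y0 by auto
            then show False using noM2[of p y0] y0 p h by auto
          qed
          have qn: "A p \<notin> B ` Q"
          proof -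
            have BQ: "B ` Q = B ` (Q - {p})"
            proof
              show "B ` Q \<subseteq> B ` (Q - {p})"
              proof
                fix t assume "t \<in> B ` Q"
                then obtain z where z: "z \<in> Q" "t = B z" by blast
                show "t \<in> B ` (Q - {p})"
                proof (cases "z = p")
                  case True
                  then have "t = B y0" using z y0 by simp
                  then show ?thesis using y0 by blast
                next
                  case False
                  then show ?thesis using z by blast
                qed
              qed
            qed blast
            have "card (B ` Q) = card Q - 1" unfolding BQ using card_image[OF injp] p fin by simp
            then have "card (B ` Q) < card Q" using two by simp
            have "\<not> Q \<subseteq> B ` Q"
            proof
              assume "Q \<subseteq> B ` Q"
              then have "card Q \<le> card (B ` Q)" using fin by (intro card_mono) auto
              then show False using \<open>card (B ` Q) < card Q\<close> by simp
            qed
            then obtain m where m: "m \<in> Q" "m \<notin> B ` Q" by blast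
            have "\<not> A ` (Q - {m}) \<subseteq> Q - {m}" using noR m by blast
            then obtain z where z: "z \<in> Q" "z \<noteq> m" "A z = m" using clA by blast
            have "z = p" using fx z by auto
            then show ?thesis using m z by simp
          qed
          show ?thesis using hard_case[OF fin two clA clB p Ap fx injp y0(1,2) yq y0(3) qn sy] .
        qed
      qed
    qed
  qed
qed

theorem mainTheorem1:
  fixes Q :: "'q set" and delta :: "'q \<Rightarrow> 'c \<Rightarrow> 'q" and a b :: 'c and n :: nat
  assumes "is_dfa Q {a, b} delta"
    and "a \<noteq> b"
    and "card Q = n"
    and "synchronizing Q {a, b} delta"
    and "simple_idempotent Q delta a"
  shows "reset_threshold Q {a, b} delta \<le> (n - 1)^2"
proof -
  define A where "A = (\<lambda>x. delta x a)"
  define B where "B = (\<lambda>x. delta x b)"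
  have fin: "finite Q" and ne: "Q \<noteq> {}" and clA: "A ` Q \<subseteq> Q" and clB: "B ` Q \<subseteq> Q"
    using assms(1) unfolding is_dfa_def A_def B_def by auto
  have c1: "card (Q - A ` Q) = 1" and idem: "\<forall>x\<in>Q. A x = A (A x)"
    using assms(5) unfolding simple_idempotent_def A_def by auto
  obtain p where pQ: "Q - A ` Q = {p}" using c1 card_1_singletonE by blast
  have "p \<in> Q" using pQ by auto
  have fx: "\<forall>x\<in>Q. x \<noteq> p \<longrightarrow> A x = x"
  proof (intro ballI impI)
    fix x assume "x \<in> Q" "x \<noteq> p"
    then have "x \<in> A ` Q" using pQ by auto
    then obtain z where "z \<in> Q" "x = A z" by auto
    then show "A x = x" using idem by auto
  qed
  have cls: "inv_cls Q A B" unfolding inv_cls_def using fin ne clA clB fx \<open>p \<in> Q\<close> by blast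
  obtain w0 where w0: "reset_word Q {a, b} delta w0"
    using assms(4) unfolding synchronizing_def by blast
  have "syn Q A B"
  proof -
    have "(\<lambda>q. delta_word delta q w0) ` Q = run A B (map (\<lambda>c. c = a) w0) ` Q"
      using w0 assms(2) unfolding reset_word_def A_def B_def
      by (auto simp: delta_word_run[symmetric])
    then show ?thesis using w0 unfolding syn_def reset_word_def by metis
  qed
  then obtain w where w: "card (run A B w ` Q) = 1" "length w \<le> (card Q - 1)^2"
    using core cls by blast
  define w' where "w' = map (\<lambda>c. if c then a else b) w"
  have "(\<lambda>q. delta_word delta q w') ` Q = run A B w ` Q"
    unfolding w'_def A_def B_def by (simp add: delta_word_run2)
  moreover have "set w' \<subseteq> {a, b}" unfolding w'_def by auto
  ultimately have rw: "reset_word Q {a, b} delta w'" using w unfolding reset_word_def by simp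
  have "reset_threshold Q {a, b} delta \<le> length w'"
    unfolding reset_threshold_def by (rule Least_le) (use rw in blast)
  then show ?thesis using w assms(3) unfolding w'_def by simp
qed

end
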